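(* A permutation $w\in S_n$ is circuit-free if and only if $|R(w)|=|B(w)|+|C(w)|-1$.
   Context: $S_n$ is generated by the adjacent transpositions $s_1,\dots,s_{n-1}$. A reduced word for $w$ is a word $i_1\cdots i_k$ with $w=s_{i_1}\cdots s_{i_k}$ and $k$ minimal; $R(w)$ is the set of reduced words. A braid move replaces a factor (consecutive letters) $i(i+1)i$ by $(i+1)i(i+1)$ or vice versa; a commutation move replaces a factor $ij$ with $|i-j|>1$ by $ji$. $B(w)$ (resp. $C(w)$) is the set of equivalence classes of $R(w)$ under sequences of braid moves (resp. commutation moves). Let $\Gamma(w)$ be the simple graph with vertex set $B(w)\sqcup C(w)$, with an edge between $B\in B(w)$ and $C\in C(w)$ if and only if $B\cap C\neq\emptyset$. The permutation $w$ is circuit-free if $\Gamma(w)$ contains no cycle (i.e. $\Gamma(w)$ is a forest; it is in fact connected, so this means it is a tree). *)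

theory Defs
  imports "HOL-Combinatorics.Permutations" "HOL-Combinatorics.Transposition"
begin

text \<open>Permutations of S_n act on {1..n}; s_i is the adjacent transposition of i and i+1,
  for 1 \<le> i \<le> n-1. A word i_1...i_k denotes s_{i_1} \<circ> ... \<circ> s_{i_k}.\<close>

definition adj_transp :: "nat \<Rightarrow> nat \<Rightarrow> nat" where
  "adj_transp i = transpose i (Suc i)"

definition word_perm :: "nat list \<Rightarrow> nat \<Rightarrow> nat" where
  "word_perm ws = foldr (\<lambda>i f. adj_transp i \<circ> f) ws id"

definition is_word_for :: "nat \<Rightarrow> (nat \<Rightarrow> nat) \<Rightarrow> nat list \<Rightarrow> bool" where
  "is_word_for n w ws \<longleftrightarrow> set ws \<subseteq> {1..<n} \<and> word_perm ws = w"

definition coxeter_length :: "nat \<Rightarrow> (nat \<Rightarrow> nat) \<Rightarrow> nat" where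
  "coxeter_length n w = (LEAST k. \<exists>ws. is_word_for n w ws \<and> length ws = k)"

definition reduced_words :: "nat \<Rightarrow> (nat \<Rightarrow> nat) \<Rightarrow> nat list set" where
  "reduced_words n w = {ws. is_word_for n w ws \<and> length ws = coxeter_length n w}"

definition braid_move :: "nat list \<Rightarrow> nat list \<Rightarrow> bool" where
  "braid_move u v \<longleftrightarrow> (\<exists>x y i.
     (u = x @ [i, Suc i, i] @ y \<and> v = x @ [Suc i, i, Suc i] @ y) \<or>
     (u = x @ [Suc i, i, Suc i] @ y \<and> v = x @ [i, Suc i, i] @ y))"

definition comm_move :: "nat list \<Rightarrow> nat list \<Rightarrow> bool" where
  "comm_move u v \<longleftrightarrow> (\<exists>x y i j. (i > Suc j \<or> j > Suc i) \<and>
     u = x @ [i, j] @ y \<and> v = x @ [j, i] @ y)"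

definition move_classes :: "('a \<Rightarrow> 'a \<Rightarrow> bool) \<Rightarrow> 'a set \<Rightarrow> 'a set set" where
  "move_classes mv S =
     (\<lambda>u. {v \<in> S. (\<lambda>a b. a \<in> S \<and> b \<in> S \<and> mv a b)\<^sup>*\<^sup>* u v}) ` S"

definition braid_classes :: "nat \<Rightarrow> (nat \<Rightarrow> nat) \<Rightarrow> nat list set set" where
  "braid_classes n w = move_classes braid_move (reduced_words n w)"

definition comm_classes :: "nat \<Rightarrow> (nat \<Rightarrow> nat) \<Rightarrow> nat list set set" where
  "comm_classes n w = move_classes comm_move (reduced_words n w)"

definition gamma_vertices :: "nat \<Rightarrow> (nat \<Rightarrow> nat) \<Rightarrow> (nat list set + nat list set) set" where
  "gamma_vertices n w = Inl ` braid_classes n w \<union> Inr ` comm_classes n w"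

definition gamma_adj :: "(nat list set + nat list set) \<Rightarrow> (nat list set + nat list set) \<Rightarrow> bool" where
  "gamma_adj x y \<longleftrightarrow> (\<exists>b c. ((x = Inl b \<and> y = Inr c) \<or> (x = Inr c \<and> y = Inl b)) \<and> b \<inter> c \<noteq> {})"

definition has_cycle :: "'v set \<Rightarrow> ('v \<Rightarrow> 'v \<Rightarrow> bool) \<Rightarrow> bool" where
  "has_cycle V E \<longleftrightarrow> (\<exists>vs. length vs \<ge> 3 \<and> distinct vs \<and> set vs \<subseteq> V \<and>
     (\<forall>i < length vs. E (vs ! i) (vs ! ((i + 1) mod length vs))))"

definition circuit_free :: "nat \<Rightarrow> (nat \<Rightarrow> nat) \<Rightarrow> bool" where
  "circuit_free n w \<longleftrightarrow> \<not> has_cycle (gamma_vertices n w) gamma_adj"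

end

theory Submission
  imports Defs
begin


definition edges :: "'v set \<Rightarrow> ('v \<Rightarrow> 'v \<Rightarrow> bool) \<Rightarrow> 'v set set" where
  "edges V E = {{a,b} | a b. a \<in> V \<and> b \<in> V \<and> E a b}"

lemma finite_edges: "finite V \<Longrightarrow> finite (edges V E)"
proof -
  assume "finite V"
  have "edges V E \<subseteq> Pow V" unfolding edges_def by auto
  thus ?thesis using \<open>finite V\<close> finite_subset by blast
qed

lemma conn_edges_lower:
  fixes V :: "'v set"
  assumes fin: "finite V" and rV: "r \<in> V"
    and conn: "\<forall>x\<in>V. (\<lambda>a b. a \<in> V \<and> b \<in> V \<and> E a b)\<^sup>*\<^sup>* r x"
  shows "card V \<le> card (edges V E) + 1"
proof -
  define R where "R = (\<lambda>a b. a \<in> V \<and> b \<in> V \<and> E a b)"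
  define d where "d x = (LEAST k. (R^^k) r x)" for x
  have dI: "(R^^(d x)) r x" if "x \<in> V" for x
  proof -
    have "\<exists>k. (R^^k) r x" using conn that rtranclp_power unfolding R_def by metis
    thus ?thesis unfolding d_def by (rule LeastI_ex)
  qed
  have dle: "(R^^k) r x \<Longrightarrow> d x \<le> k" for k x unfolding d_def by (rule Least_le)
  have par: "\<exists>u. R u x \<and> Suc (d u) = d x" if "x \<in> V" "x \<noteq> r" for x
  proof -
    have h: "(R^^(d x)) r x" using dI that by blast
    have "d x \<noteq> 0" proof
      assume "d x = 0" thus False using h that by auto
    qed
    then obtain m where m: "d x = Suc m" by (cases "d x") auto
    from h[unfolded m] obtain u where u1: "(R^^m) r u" and u2: "R u x" by (rule relpowp_Suc_E)
    have "d u \<le> m" using dle u1 .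
    moreover have uV: "u \<in> V" using u2 unfolding R_def by simp
    have "(R^^Suc (d u)) r x" using relpowp_Suc_I[OF dI[OF uV] u2] .
    hence "d x \<le> Suc (d u)" using dle by blast
    ultimately show ?thesis using u2 m by (intro exI[of _ u]) auto
  qed
  define p where "p x = (SOME u. R u x \<and> Suc (d u) = d x)" for x
  have pP: "R (p x) x \<and> Suc (d (p x)) = d x" if "x \<in> V" "x \<noteq> r" for x
    unfolding p_def using someI_ex[OF par[OF that]] .
  have inj: "inj_on (\<lambda>x. {p x, x}) (V - {r})"
  proof (rule inj_onI)
    fix x y assume x: "x \<in> V - {r}" and y: "y \<in> V - {r}" and eq: "{p x, x} = {p y, y}"
    show "x = y"
    proof (rule ccontr)
      assume "x \<noteq> y"
      hence "x = p y" "y = p x" using eq by (auto simp: doubleton_eq_iff)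
      thus False using pP[of x] pP[of y] x y by auto
    qed
  qed
  have sub: "(\<lambda>x. {p x, x}) ` (V - {r}) \<subseteq> edges V E"
    using pP unfolding edges_def R_def by blast
  have "card (V - {r}) \<le> card (edges V E)"
    using card_inj_on_le[OF inj sub finite_edges[OF fin]] .
  thus ?thesis using rV fin by (simp add: card_Diff_singleton)
qed

lemma has_cycle_mono: "has_cycle V' E \<Longrightarrow> V' \<subseteq> V \<Longrightarrow> has_cycle V E"
  unfolding has_cycle_def by blast

lemma mindeg_cycle:
  fixes V :: "'v set"
  assumes fin: "finite V" and ne: "V \<noteq> {}" and irr: "\<forall>a. \<not> E a a"
    and deg: "\<forall>v\<in>V. \<exists>u1 u2. u1 \<noteq> u2 \<and> u1 \<in> V \<and> u2 \<in> V \<and> E v u1 \<and> E v u2"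
  shows "has_cycle V E"
proof -
  define P where "P = {vs. vs \<noteq> [] \<and> distinct vs \<and> set vs \<subseteq> V \<and>
      (\<forall>i. Suc i < length vs \<longrightarrow> E (vs!i) (vs!Suc i))}"
  have finP: "finite P"
    by (rule finite_subset[OF _ finite_subset_distinct[OF fin]]) (auto simp: P_def)
  obtain v0 where v0: "v0 \<in> V" using ne by blast
  have "[v0] \<in> P" using v0 by (auto simp: P_def)
  hence neP: "length ` P \<noteq> {}" by blast
  define M where "M = Max (length ` P)"
  obtain vs where vsP: "vs \<in> P" and vsM: "length vs = M"
    using Max_in[OF finite_imageI[OF finP] neP] unfolding M_def by auto
  have maxl: "length ws \<le> length vs" if "ws \<in> P" for ws
    using Max_ge[OF finite_imageI[OF finP]] that vsM unfolding M_def by auto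
  have vsne: "vs \<noteq> []" and vsd: "distinct vs" and vsV: "set vs \<subseteq> V"
    and vsE: "\<And>i. Suc i < length vs \<Longrightarrow> E (vs!i) (vs!Suc i)"
    using vsP by (auto simp: P_def)
  define L where "L = length vs"
  define l where "l = last vs"
  have lV: "l \<in> V" using vsV vsne unfolding l_def by auto
  have l_eq: "vs ! (L - 1) = l" using vsne unfolding l_def L_def by (simp add: last_conv_nth)
  have nb: "u \<in> set vs" if "u \<in> V" "E l u" for u
  proof (rule ccontr)
    assume nu: "u \<notin> set vs"
    have "vs @ [u] \<in> P"
      unfolding P_def
    proof (intro CollectI conjI allI impI)
      show "vs @ [u] \<noteq> []" by simp
      show "distinct (vs @ [u])" using vsd nu by simp
      show "set (vs @ [u]) \<subseteq> V" using vsV that by simp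
      fix i assume i: "Suc i < length (vs @ [u])"
      show "E ((vs @ [u]) ! i) ((vs @ [u]) ! Suc i)"
      proof (cases "Suc i < length vs")
        case True thus ?thesis using vsE[OF True] by (simp add: nth_append)
      next
        case False
        hence "Suc i = length vs" using i by simp
        hence "i = length vs - 1" by simp
        thus ?thesis using that l_eq \<open>Suc i = length vs\<close> unfolding L_def by (simp add: nth_append)
      qed
    qed
    thus False using maxl by fastforce
  qed
  obtain u1 u2 where u: "u1 \<noteq> u2" "u1 \<in> V" "u2 \<in> V" "E l u1" "E l u2"
    using deg lV by blast
  have L2: "L \<ge> 2"
  proof (rule ccontr)
    assume "\<not> L \<ge> 2"
    moreover have "L > 0" using vsne unfolding L_def by simp
    ultimately have "L = 1" by linarith
    hence "set vs = {l}" using vsne unfolding l_def L_def by (cases vs) auto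
    thus False using nb[OF u(2) u(4)] u(4) irr by auto
  qed
  obtain u where uV: "u \<in> V" and ul: "E l u" and up: "u \<noteq> vs ! (L - 2)"
    using u by metis
  have "u \<in> set vs" using nb uV ul by blast
  then obtain j where j: "j < L" "vs ! j = u" unfolding L_def by (auto simp: in_set_conv_nth)
  have "j \<noteq> L - 1" using j l_eq ul irr by auto
  moreover have "j \<noteq> L - 2" using j up by auto
  ultimately have j3: "j + 3 \<le> L" using j L2 by linarith
  define cs where "cs = drop j vs"
  have lcs: "length cs = L - j" unfolding cs_def L_def by simp
  show ?thesis unfolding has_cycle_def
  proof (intro exI[of _ cs] conjI allI impI)
    show "3 \<le> length cs" using lcs j3 by simp
    show "distinct cs" using vsd unfolding cs_def by simp
    show "set cs \<subseteq> V" using vsV unfolding cs_def by (meson set_drop_subset subset_trans)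
    fix i assume i: "i < length cs"
    show "E (cs ! i) (cs ! ((i + 1) mod length cs))"
    proof (cases "i + 1 < length cs")
      case True
      hence "(i+1) mod length cs = Suc i" by simp
      moreover have "Suc (j + i) < length vs" using True lcs unfolding L_def by simp
      ultimately show ?thesis using vsE[of "j+i"] True j unfolding cs_def L_def by simp
    next
      case False
      hence ii: "i + 1 = length cs" using i by simp
      hence "(i+1) mod length cs = 0" by simp
      moreover have "j + i = L - 1" using ii lcs by simp
      hence "cs ! i = l" using l_eq j unfolding cs_def L_def by simp
      moreover have "cs ! 0 = u" using j unfolding cs_def L_def by simp
      ultimately show ?thesis using ul by simp
    qed
  qed
qed

lemma acyclic_edges_upper:
  fixes V :: "'v set"
  assumes "finite V" "V \<noteq> {}" and sym: "\<forall>a b. E a b \<longrightarrow> E b a" and irr: "\<forall>a. \<not> E a a"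
    and "\<not> has_cycle V E"
  shows "card (edges V E) < card V"
  using assms(1,2,5)
proof (induction "card V" arbitrary: V rule: less_induct)
  case less
  have "\<not> (\<forall>v\<in>V. \<exists>u1 u2. u1 \<noteq> u2 \<and> u1 \<in> V \<and> u2 \<in> V \<and> E v u1 \<and> E v u2)"
    using mindeg_cycle[of V E] less.prems irr by blast
  then obtain v where vV: "v \<in> V" and vd: "\<forall>u1 u2. u1 \<in> V \<and> u2 \<in> V \<and> E v u1 \<and> E v u2 \<longrightarrow> u1 = u2"
    by blast
  obtain u0 where u0: "{u \<in> V. E v u} \<subseteq> {u0}"
    using vd by blast
  have sub: "edges V E \<subseteq> insert {v, u0} (edges (V - {v}) E)"
  proof
    fix x assume "x \<in> edges V E"
    then obtain a b where x: "x = {a,b}" "a \<in> V" "b \<in> V" "E a b" unfolding edges_def by blast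
    show "x \<in> insert {v, u0} (edges (V - {v}) E)"
    proof (cases "a = v \<or> b = v")
      case True
      thus ?thesis
      proof
        assume "a = v" thus ?thesis using x u0 by auto
      next
        assume "b = v" thus ?thesis using x u0 sym by auto
      qed
    next
      case False thus ?thesis using x unfolding edges_def by blast
    qed
  qed
  have fe: "finite (edges (V - {v}) E)" using finite_edges less.prems(1) by blast
  have c1: "card (edges V E) \<le> card (edges (V - {v}) E) + 1"
    using card_mono[OF _ sub] fe card_insert_le_m1 by (metis card_insert_if finite_insert le_SucI Suc_eq_plus1 order_refl)
  show ?case
  proof (cases "V - {v} = {}")
    case True
    hence "V = {v}" using vV by blast
    hence "edges V E = {}" using irr unfolding edges_def by auto
    moreover have "card V > 0" using vV less.prems(1) card_gt_0_iff by blast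
    ultimately show ?thesis by simp
  next
    case False
    have lt: "card (V - {v}) < card V" using vV less.prems(1) by (meson card_Diff1_less)
    have "\<not> has_cycle (V - {v}) E" using less.prems(3) has_cycle_mono by blast
    hence "card (edges (V - {v}) E) < card (V - {v})"
      using less.hyps[OF lt] less.prems(1) False by blast
    thus ?thesis using c1 lt by (simp add: card_Diff_singleton[OF vV])
  qed
qed

lemma rtranclp_sym:
  assumes "\<forall>a b. R a b \<longrightarrow> R b a" "R\<^sup>*\<^sup>* x y" shows "R\<^sup>*\<^sup>* y x"
  using assms(2)
proof (induction rule: rtranclp_induct)
  case base thus ?case by simp
next
  case (step y z)
  thus ?case using assms(1) by (meson converse_rtranclp_into_rtranclp)
qed

lemma cycle_edge_removal:
  fixes V :: "'v set"
  assumes sym: "\<forall>a b. E a b \<longrightarrow> E b a" and cyc: "has_cycle V E"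
  shows "\<exists>e \<in> edges V E. \<forall>x y. (\<lambda>a b. a \<in> V \<and> b \<in> V \<and> E a b)\<^sup>*\<^sup>* x y \<longrightarrow>
             (\<lambda>a b. a \<in> V \<and> b \<in> V \<and> E a b \<and> {a,b} \<noteq> e)\<^sup>*\<^sup>* x y"
proof -
  obtain vs where m3: "length vs \<ge> 3" and d: "distinct vs" and sV: "set vs \<subseteq> V"
    and cE: "\<forall>i < length vs. E (vs ! i) (vs ! ((i + 1) mod length vs))"
    using cyc unfolding has_cycle_def by blast
  define m where "m = length vs"
  define a where "a = vs ! 0"
  define b where "b = vs ! 1"
  define e where "e = {a, b}"
  define R' where "R' = (\<lambda>x y. x \<in> V \<and> y \<in> V \<and> E x y \<and> {x,y} \<noteq> e)"
  have inV: "i < m \<Longrightarrow> vs ! i \<in> V" for i using sV unfolding m_def by auto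
  have neq: "vs ! i = vs ! j \<longleftrightarrow> i = j" if "i < m" "j < m" for i j
    using d that nth_eq_iff_index_eq unfolding m_def by blast
  have eab: "E a b" using cE m3 unfolding a_def b_def by force
  have eE: "e \<in> edges V E" unfolding e_def edges_def
    using eab inV[of 0] inV[of 1] m3 unfolding a_def b_def m_def by fastforce
  have walk: "1 \<le> k \<Longrightarrow> k < m \<Longrightarrow> R'\<^sup>*\<^sup>* b (vs ! k)" for k
  proof (induction k)
    case 0 thus ?case by simp
  next
    case (Suc k)
    show ?case
    proof (cases "k = 0")
      case True thus ?thesis unfolding b_def by simp
    next
      case False
      have IH: "R'\<^sup>*\<^sup>* b (vs ! k)" using Suc False by simp
      have "E (vs ! k) (vs ! Suc k)" using cE Suc.prems unfolding m_def
        by (metis Suc_eq_plus1 Suc_lessD mod_less)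
      moreover have "{vs ! k, vs ! Suc k} \<noteq> e"
      proof -
        have kk: "k \<noteq> 0" "Suc k < length vs" using Suc.prems False unfolding m_def by auto
        have z: "0 < length vs" "k < length vs" using kk by auto
        have n1: "vs ! Suc k \<noteq> vs ! 0" using nth_eq_iff_index_eq[OF d kk(2) z(1)] by simp
        have n2: "vs ! k \<noteq> vs ! 0" using nth_eq_iff_index_eq[OF d z(2) z(1)] kk(1) by simp
        show ?thesis using n1 n2 unfolding e_def a_def b_def by (auto simp: doubleton_eq_iff)
      qed
      ultimately have "R' (vs ! k) (vs ! Suc k)" unfolding R'_def using inV Suc.prems by auto
      thus ?thesis using IH by (meson rtranclp.rtrancl_into_rtrancl)
    qed
  qed
  have w1: "R'\<^sup>*\<^sup>* b (vs ! (m - 1))" using walk[of "m - 1"] m3 unfolding m_def by simp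
  have mm0: "m - 1 + 1 = m" using m3 unfolding m_def by auto
  have mm: "m - 1 < m" "(m - 1 + 1) mod m = 0" using m3 unfolding m_def by (auto simp only: mm0[unfolded m_def]) auto
  have "E (vs ! (m - 1)) a" using cE mm unfolding a_def m_def by metis
  moreover have "{vs ! (m - 1), a} \<noteq> e"
  proof -
    have z: "0 < length vs" "1 < length vs" "m - 1 < length vs" "m - 1 \<noteq> 0" "m - 1 \<noteq> 1"
      using m3 unfolding m_def by auto
    have n1: "vs ! (m - 1) \<noteq> vs ! 0" using nth_eq_iff_index_eq[OF d z(3) z(1)] z(4) by simp
    have n2: "vs ! (m - 1) \<noteq> vs ! 1" using nth_eq_iff_index_eq[OF d z(3) z(2)] z(5) by simp
    show ?thesis using n1 n2 unfolding e_def a_def b_def by (auto simp: doubleton_eq_iff)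
  qed
  moreover have "0 < m" "m - 1 < m" using m3 unfolding m_def by auto
  ultimately have "R' (vs ! (m - 1)) a" unfolding R'_def using inV[of "m-1"] inV[of 0]
    unfolding a_def by auto
  hence ba: "R'\<^sup>*\<^sup>* b a" using w1 by (meson rtranclp.rtrancl_into_rtrancl)
  have symR: "\<forall>x y. R' x y \<longrightarrow> R' y x" unfolding R'_def using sym by (auto simp: insert_commute)
  have ab: "R'\<^sup>*\<^sup>* a b" using rtranclp_sym[OF symR ba] .
  have stepR: "R'\<^sup>*\<^sup>* x y" if "x \<in> V" "y \<in> V" "E x y" for x y
  proof (cases "{x,y} = e")
    case True
    hence "(x = a \<and> y = b) \<or> (x = b \<and> y = a)" unfolding e_def by (auto simp: doubleton_eq_iff)
    thus ?thesis using ab ba by blast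
  next
    case False thus ?thesis using that unfolding R'_def by auto
  qed
  show ?thesis
  proof (intro bexI[OF _ eE] allI impI)
    fix x y assume "(\<lambda>a b. a \<in> V \<and> b \<in> V \<and> E a b)\<^sup>*\<^sup>* x y"
    thus "(\<lambda>a b. a \<in> V \<and> b \<in> V \<and> E a b \<and> {a,b} \<noteq> e)\<^sup>*\<^sup>* x y"
    proof (induction rule: rtranclp_induct)
      case base thus ?case by simp
    next
      case (step y z)
      thus ?case using stepR[of y z] unfolding R'_def by (meson rtranclp_trans)
    qed
  qed
qed




lemma word_perm_Nil [simp]: "word_perm [] = id"
  by (simp add: word_perm_def)
lemma word_perm_Cons [simp]: "word_perm (i # ws) = adj_transp i \<circ> word_perm ws"
  by (simp add: word_perm_def)
lemma word_perm_append [simp]: "word_perm (xs @ ys) = word_perm xs \<circ> word_perm ys"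
  by (induction xs) (auto simp: comp_assoc)

lemma bij_adj_transp [simp]: "bij (adj_transp i)"
  by (simp add: adj_transp_def)
lemma adj_transp_invol [simp]: "adj_transp i (adj_transp i x) = x"
  by (simp add: adj_transp_def)
lemma adj_transp_comp_invol [simp]: "adj_transp i \<circ> adj_transp i = id"
  by (simp add: fun_eq_iff)
lemma bij_word_perm [simp]: "bij (word_perm ws)"
proof (induction ws)
  case (Cons i ws) show ?case unfolding word_perm_Cons by (rule bij_comp[OF Cons.IH bij_adj_transp])
next
  case Nil show ?case unfolding word_perm_Nil by (rule bij_id)
qed

lemma adj_image_invol [simp]: "adj_transp i ` adj_transp i ` X = X"
  by (simp add: image_comp)
lemma adj_image_invol' [simp]: "(`) (adj_transp i) \<circ> (`) (adj_transp i) = id"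
  by (rule ext) simp

fun rseq :: "nat list \<Rightarrow> nat set list" where
  "rseq [] = []"
| "rseq (i # ws) = {i, Suc i} # map ((`) (adj_transp i)) (rseq ws)"

lemma rseq_append: "rseq (xs @ ys) = rseq xs @ map ((`) (word_perm xs)) (rseq ys)"
  by (induction xs) (auto simp: image_comp)

lemma rseq_inj: "rseq u = rseq v \<Longrightarrow> u = v"
proof (induction u arbitrary: v)
  case Nil thus ?case by (cases v) auto
next
  case (Cons i u)
  then obtain j v' where v: "v = j # v'" by (cases v) auto
  have "{i, Suc i} = {j, Suc j}" using Cons.prems v by simp
  hence ij: "i = j" by (auto simp: doubleton_eq_iff)
  have "map ((`) (adj_transp i)) (rseq u) = map ((`) (adj_transp i)) (rseq v')"
    using Cons.prems v ij by simp
  hence "map ((`) (adj_transp i)) (map ((`) (adj_transp i)) (rseq u)) =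
         map ((`) (adj_transp i)) (map ((`) (adj_transp i)) (rseq v'))" by simp
  hence "rseq u = rseq v'" by (simp add: image_comp)
  thus ?case using Cons.IH v ij by simp
qed

definition filt :: "nat set list \<Rightarrow> nat set \<Rightarrow> nat set \<Rightarrow> nat set list" where
  "filt L A B = filter (\<lambda>Z. Z \<in> {A, B}) L"

lemma filt_all_eq: "(\<forall>A B. filt L1 A B = filt L2 A B) \<Longrightarrow> L1 = L2"
proof (induction L1 arbitrary: L2)
  case Nil
  show ?case
  proof (cases L2)
    case (Cons Y L2')
    have "filt [] Y Y = filt L2 Y Y" using Nil by blast
    hence "filt L2 Y Y = []" by (simp add: filt_def)
    thus ?thesis using Cons by (simp add: filt_def)
  qed simp
next
  case (Cons X L1)
  have "filt (X # L1) X X = filt L2 X X" using Cons.prems by blast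
  hence h: "filt L2 X X \<noteq> []" by (simp add: filt_def) (metis list.distinct(1))
  obtain Y L2' where L2: "L2 = Y # L2'" using h by (cases L2) (auto simp: filt_def)
  have XY: "X = Y"
  proof -
    have "filt (X # L1) X Y = filt L2 X Y" using Cons.prems by blast
    thus ?thesis using L2 by (simp add: filt_def)
  qed
  have "filt L1 A B = filt L2' A B" for A B
  proof -
    have e: "filt (X # L1) A B = filt (X # L2') A B" using Cons.prems L2 XY by blast
    show ?thesis
    proof (cases "X \<in> {A, B}")
      case True thus ?thesis using e by (simp add: filt_def)
    next
      case False thus ?thesis using e by (simp only: filt_def filter.simps if_False)
    qed
  qed
  thus ?case using Cons.IH L2 XY by simp
qed

lemma filter_swap_gen:
  assumes "\<not> (R X \<and> R Y)"
  shows "filter R (P @ [X, Y] @ Q) = filter R (P @ [Y, X] @ Q)"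
  using assms by (cases "R X"; cases "R Y") simp_all

lemma filter_rev3_gen:
  assumes "\<not> (R X \<and> R Y)" "\<not> (R X \<and> R Z)" "\<not> (R Y \<and> R Z)"
  shows "filter R (P @ [X, Y, Z] @ Q) = filter R (P @ [Z, Y, X] @ Q)"
  using assms by (cases "R X"; cases "R Y"; cases "R Z") simp_all

lemma filt_swap:
  assumes "\<not> (X \<in> {A,B} \<and> Y \<in> {A,B})"
  shows "filt (P @ [X, Y] @ Q) A B = filt (P @ [Y, X] @ Q) A B"
  unfolding filt_def by (rule filter_swap_gen) (use assms in blast)

lemma filt_rev3:
  assumes "\<not> (X \<in> {A,B} \<and> Y \<in> {A,B})" "\<not> (X \<in> {A,B} \<and> Z \<in> {A,B})" "\<not> (Y \<in> {A,B} \<and> Z \<in> {A,B})"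
  shows "filt (P @ [X, Y, Z] @ Q) A B = filt (P @ [Z, Y, X] @ Q) A B"
  unfolding filt_def by (rule filter_rev3_gen) (use assms in blast)+

lemma adj_transp_comm:
  assumes "i > Suc j \<or> j > Suc i"
  shows "adj_transp i \<circ> adj_transp j = adj_transp j \<circ> adj_transp i"
  using assms by (auto simp: fun_eq_iff adj_transp_def transpose_def)

lemma adj_transp_braid:
  "adj_transp i \<circ> adj_transp (Suc i) \<circ> adj_transp i = adj_transp (Suc i) \<circ> adj_transp i \<circ> adj_transp (Suc i)"
  by (auto simp: fun_eq_iff adj_transp_def transpose_def)

lemma adj_apply: "adj_transp i x = (if x = i then Suc i else if x = Suc i then i else x)"
  by (simp add: adj_transp_def transpose_def)

lemma rseq_comm2:
  assumes c: "i > Suc j \<or> j > Suc i"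
  shows "rseq ([i, j] @ y) = [{i, Suc i}, {j, Suc j}] @ map ((`) (adj_transp i \<circ> adj_transp j)) (rseq y)"
proof -
  have "adj_transp i ` {j, Suc j} = {j, Suc j}" using c by (auto simp: adj_apply)
  thus ?thesis by (simp add: rseq_append[of "[i, j]"] image_comp)
qed

lemma rseq_braid3:
  "rseq ([i, Suc i, i] @ y) = [{i, Suc i}, {i, Suc (Suc i)}, {Suc i, Suc (Suc i)}] @
     map ((`) (adj_transp i \<circ> (adj_transp (Suc i) \<circ> adj_transp i))) (rseq y)"
proof -
  have "adj_transp i ` {Suc i, Suc (Suc i)} = {i, Suc (Suc i)}" by (auto simp: adj_apply)
  moreover have "adj_transp i ` adj_transp (Suc i) ` {i, Suc i} = {Suc i, Suc (Suc i)}" by (auto simp: adj_apply)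
  ultimately show ?thesis by (simp add: rseq_append[of "[i, Suc i, i]"] image_comp)
qed

lemma rseq_braid3':
  "rseq ([Suc i, i, Suc i] @ y) = [{Suc i, Suc (Suc i)}, {i, Suc (Suc i)}, {i, Suc i}] @
     map ((`) (adj_transp i \<circ> (adj_transp (Suc i) \<circ> adj_transp i))) (rseq y)"
proof -
  have "adj_transp (Suc i) ` {i, Suc i} = {i, Suc (Suc i)}" by (auto simp: adj_apply)
  moreover have "adj_transp (Suc i) ` adj_transp i ` {Suc i, Suc (Suc i)} = {i, Suc i}" by (auto simp: adj_apply)
  moreover have "\<And>x. adj_transp (Suc i) (adj_transp i (adj_transp (Suc i) x)) = adj_transp i (adj_transp (Suc i) (adj_transp i x))"
    using adj_transp_braid[of i] by (simp add: fun_eq_iff)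
  ultimately show ?thesis by (simp add: rseq_append[of "[Suc i, i, Suc i]"] image_comp)
qed

lemma pair_in_pair:
  assumes "P \<in> {A, B}" "Q \<in> {A, B}" "P \<noteq> Q"
  shows "A \<noteq> B \<and> A \<inter> B = P \<inter> Q"
proof -
  have "(A = P \<and> B = Q) \<or> (A = Q \<and> B = P)" using assms by blast
  thus ?thesis
  proof
    assume "A = P \<and> B = Q" thus ?thesis using assms(3) by simp
  next
    assume "A = Q \<and> B = P" thus ?thesis using assms(3) by (simp add: Int_commute)
  qed
qed

lemma comm_move_rseq:
  assumes "comm_move u v"
  shows "filt (rseq u) A B = filt (rseq v) A B \<or> (A \<noteq> B \<and> A \<inter> B = {})"
proof -
  obtain x y i j where c: "i > Suc j \<or> j > Suc i" and u: "u = x @ [i, j] @ y" and v: "v = x @ [j, i] @ y"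
    using assms unfolding comm_move_def by blast
  define p where "p = word_perm x"
  have injp: "inj p" unfolding p_def using bij_word_perm bij_is_inj by blast
  define X where "X = p ` {i, Suc i}"
  define Y where "Y = p ` {j, Suc j}"
  have c': "j > Suc i \<or> i > Suc j" using c by blast
  have cm: "adj_transp j \<circ> adj_transp i = adj_transp i \<circ> adj_transp j" using adj_transp_comm[OF c] by simp
  define T where "T = map ((`) p) (map ((`) (adj_transp i \<circ> adj_transp j)) (rseq y))"
  have ru: "rseq u = rseq x @ [X, Y] @ T"
    unfolding u X_def Y_def T_def p_def by (simp only: rseq_append[of x] rseq_comm2[OF c] map_append list.map)
  have rv: "rseq v = rseq x @ [Y, X] @ T"
    unfolding v X_def Y_def T_def p_def by (simp only: rseq_append[of x] rseq_comm2[OF c'] cm map_append list.map)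
  have dis: "{i, Suc i} \<inter> {j, Suc j} = {}" using c by auto
  have XY: "X \<inter> Y = {}" unfolding X_def Y_def using dis image_Int[OF injp, of "{i, Suc i}" "{j, Suc j}"] by simp
  have XY2: "X \<noteq> Y" using XY unfolding X_def by auto
  show ?thesis
  proof (cases "X \<in> {A,B} \<and> Y \<in> {A,B}")
    case True
    hence "A \<noteq> B \<and> A \<inter> B = {}" using XY XY2 pair_in_pair[of X A B Y] by simp
    thus ?thesis by blast
  next
    case False
    have "filt (rseq x @ [X, Y] @ T) A B = filt (rseq x @ [Y, X] @ T) A B"
      by (rule filt_swap) (use False in blast)
    thus ?thesis unfolding ru rv by (rule disjI1)
  qed
qed

lemma braid_move_rseq:
  assumes "braid_move u v"
  shows "filt (rseq u) A B = filt (rseq v) A B \<or> (A \<inter> B \<noteq> {} \<and> A \<noteq> B)"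
proof -
  have main: "filt (rseq u) A B = filt (rseq v) A B \<or> (A \<inter> B \<noteq> {} \<and> A \<noteq> B)"
    if u: "u = x @ [i, Suc i, i] @ y" and v: "v = x @ [Suc i, i, Suc i] @ y" for u v x y i
  proof -
    define p where "p = word_perm x"
    have injp: "inj p" unfolding p_def using bij_word_perm bij_is_inj by blast
    define X where "X = p ` {i, Suc i}"
    define Y where "Y = p ` {i, Suc (Suc i)}"
    define Z where "Z = p ` {Suc i, Suc (Suc i)}"
    define T where "T = map ((`) p) (map ((`) (adj_transp i \<circ> (adj_transp (Suc i) \<circ> adj_transp i))) (rseq y))"
    have ru: "rseq u = rseq x @ [X, Y, Z] @ T"
      unfolding u X_def Y_def Z_def p_def T_def by (simp only: rseq_append[of x] rseq_braid3 map_append list.map)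
    have rv: "rseq v = rseq x @ [Z, Y, X] @ T"
      unfolding v X_def Y_def Z_def p_def T_def by (simp only: rseq_append[of x] rseq_braid3' map_append list.map)
    have i1: "X \<inter> Y \<noteq> {}" "X \<inter> Z \<noteq> {}" "Y \<inter> Z \<noteq> {}" unfolding X_def Y_def Z_def by auto
    have d1: "X \<noteq> Y" "X \<noteq> Z" "Y \<noteq> Z" unfolding X_def Y_def Z_def inj_image_eq_iff[OF injp]
      by (simp_all add: doubleton_eq_iff)
    show ?thesis
    proof (cases "(X \<in> {A,B} \<and> Y \<in> {A,B}) \<or> (X \<in> {A,B} \<and> Z \<in> {A,B}) \<or> (Y \<in> {A,B} \<and> Z \<in> {A,B})")
      case True
      thus ?thesis
      proof (elim disjE conjE)
        assume "X \<in> {A,B}" "Y \<in> {A,B}" thus ?thesis using pair_in_pair[of X A B Y] i1 d1 by auto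
      next
        assume "X \<in> {A,B}" "Z \<in> {A,B}" thus ?thesis using pair_in_pair[of X A B Z] i1 d1 by auto
      next
        assume "Y \<in> {A,B}" "Z \<in> {A,B}" thus ?thesis using pair_in_pair[of Y A B Z] i1 d1 by auto
      qed
    next
      case False
      have "filt (rseq x @ [X, Y, Z] @ T) A B = filt (rseq x @ [Z, Y, X] @ T) A B"
        by (rule filt_rev3) (use False in blast)+
      thus ?thesis unfolding ru rv by (rule disjI1)
    qed
  qed
  obtain x y i where "(u = x @ [i, Suc i, i] @ y \<and> v = x @ [Suc i, i, Suc i] @ y) \<or>
     (u = x @ [Suc i, i, Suc i] @ y \<and> v = x @ [i, Suc i, i] @ y)"
    using assms unfolding braid_move_def by blast
  thus ?thesis
  proof
    assume "u = x @ [i, Suc i, i] @ y \<and> v = x @ [Suc i, i, Suc i] @ y"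
    thus ?thesis using main by blast
  next
    assume "u = x @ [Suc i, i, Suc i] @ y \<and> v = x @ [i, Suc i, i] @ y"
    thus ?thesis using main[of v x i y u] by auto
  qed
qed




definition invs :: "nat \<Rightarrow> (nat \<Rightarrow> nat) \<Rightarrow> nat set set" where
  "invs n q = {{a, b} | a b. a \<in> {1..n} \<and> b \<in> {1..n} \<and> a < b \<and> q b < q a}"

definition ninv :: "nat \<Rightarrow> (nat \<Rightarrow> nat) \<Rightarrow> nat" where
  "ninv n w = card (invs n (inv w))"

lemma finite_invs [simp]: "finite (invs n q)"
proof -
  have "invs n q \<subseteq> Pow {1..n}" unfolding invs_def by auto
  thus ?thesis using finite_subset by blast
qed

lemma invsI: "a \<in> {1..n} \<Longrightarrow> b \<in> {1..n} \<Longrightarrow> a < b \<Longrightarrow> q b < q a \<Longrightarrow> X = {a, b} \<Longrightarrow> X \<in> invs n q"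
  unfolding invs_def by blast

lemma invs_id [simp]: "invs n id = {}" "invs n (\<lambda>a. a) = {}"
  unfolding invs_def by auto

lemma adj_mono:
  assumes "a < b" "{a, b} \<noteq> {i, Suc i}" shows "adj_transp i a < adj_transp i b"
  using assms by (auto simp: adj_apply doubleton_eq_iff)

lemma adj_range:
  assumes "1 \<le> i" "i < n" "a \<in> {1..n}" shows "adj_transp i a \<in> {1..n}"
  using assms by (auto simp: adj_apply)

lemma adj_image_T [simp]: "adj_transp i ` {i, Suc i} = {i, Suc i}"
  by (auto simp: adj_apply)

lemma invs_shift:
  assumes i: "1 \<le> i" "i < n" and XT: "X \<noteq> {i, Suc i}"
  shows "X \<in> invs n (q \<circ> adj_transp i) \<longleftrightarrow> adj_transp i ` X \<in> invs n q"
proof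
  assume "X \<in> invs n (q \<circ> adj_transp i)"
  then obtain a b where X: "X = {a, b}" "a \<in> {1..n}" "b \<in> {1..n}" "a < b"
    "q (adj_transp i b) < q (adj_transp i a)" unfolding invs_def by auto
  have "adj_transp i a < adj_transp i b" using adj_mono X XT by blast
  moreover have "adj_transp i ` X = {adj_transp i a, adj_transp i b}" using X by simp
  ultimately show "adj_transp i ` X \<in> invs n q"
    by (intro invsI[of "adj_transp i a" n "adj_transp i b"]) (use adj_range[OF i] X in auto)
next
  assume "adj_transp i ` X \<in> invs n q"
  then obtain c d where Y: "adj_transp i ` X = {c, d}" "c \<in> {1..n}" "d \<in> {1..n}" "c < d"
    "q d < q c" unfolding invs_def by auto
  have X: "X = {adj_transp i c, adj_transp i d}"
    using arg_cong[OF Y(1), of "image (adj_transp i)"] by simp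
  have "{c, d} \<noteq> {i, Suc i}"
  proof
    assume "{c, d} = {i, Suc i}"
    hence "adj_transp i ` adj_transp i ` X = {i, Suc i}" using Y(1) by (metis adj_image_T)
    thus False using XT by simp
  qed
  hence "adj_transp i c < adj_transp i d" using adj_mono Y by blast
  thus "X \<in> invs n (q \<circ> adj_transp i)"
    by (intro invsI[of "adj_transp i c" n "adj_transp i d"]) (use adj_range[OF i] X Y in auto)
qed

lemma invs_diff:
  assumes i: "1 \<le> i" "i < n"
  shows "invs n (q \<circ> adj_transp i) - {{i, Suc i}} = (image (adj_transp i)) ` (invs n q - {{i, Suc i}})"
proof (intro equalityI subsetI)
  fix X assume X: "X \<in> invs n (q \<circ> adj_transp i) - {{i, Suc i}}"
  hence "adj_transp i ` X \<in> invs n q" using invs_shift[OF i] by blast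
  moreover have "adj_transp i ` X \<noteq> {i, Suc i}"
  proof
    assume "adj_transp i ` X = {i, Suc i}"
    hence "adj_transp i ` adj_transp i ` X = {i, Suc i}" by (metis adj_image_T)
    thus False using X by simp
  qed
  ultimately show "X \<in> (image (adj_transp i)) ` (invs n q - {{i, Suc i}})"
    by (intro image_eqI[of _ _ "adj_transp i ` X"]) auto
next
  fix X assume "X \<in> (image (adj_transp i)) ` (invs n q - {{i, Suc i}})"
  then obtain Y where Y: "Y \<in> invs n q" "Y \<noteq> {i, Suc i}" "X = adj_transp i ` Y" by auto
  have XT: "X \<noteq> {i, Suc i}"
  proof
    assume "X = {i, Suc i}"
    hence "adj_transp i ` X = {i, Suc i}" by (metis adj_image_T)
    thus False using Y by simp
  qed
  have "adj_transp i ` X \<in> invs n q" using Y by simp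
  thus "X \<in> invs n (q \<circ> adj_transp i) - {{i, Suc i}}" using invs_shift[OF i XT] XT by blast
qed

lemma T_in_invs:
  assumes i: "1 \<le> i" "i < n"
  shows "{i, Suc i} \<in> invs n r \<longleftrightarrow> r (Suc i) < r i"
proof
  assume "{i, Suc i} \<in> invs n r"
  then obtain a b where "{i, Suc i} = {a, b}" "a < b" "r b < r a" unfolding invs_def by auto
  thus "r (Suc i) < r i" by (auto simp: doubleton_eq_iff)
next
  assume "r (Suc i) < r i"
  thus "{i, Suc i} \<in> invs n r" by (intro invsI[of i n "Suc i"]) (use i in auto)
qed

lemma card_split: "finite A \<Longrightarrow> card A = card (A - {T}) + (if T \<in> A then 1 else 0)"
proof (cases "T \<in> A")
  case True
  assume "finite A"
  from card_Suc_Diff1[OF this True] show ?thesis using True by simp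
next
  case False thus ?thesis by simp
qed

lemma card_invs_diff:
  assumes i: "1 \<le> i" "i < n"
  shows "card (invs n (q \<circ> adj_transp i) - {{i, Suc i}}) = card (invs n q - {{i, Suc i}})"
proof -
  have inj: "inj_on (image (adj_transp i)) X" for X
    by (rule inj_onI) (metis adj_image_invol)
  have "card ((image (adj_transp i)) ` (invs n q - {{i, Suc i}})) = card (invs n q - {{i, Suc i}})"
    by (rule card_image[OF inj])
  thus ?thesis by (simp only: invs_diff[OF i])
qed

lemma invs_up:
  assumes i: "1 \<le> i" "i < n" and lt: "q i < q (Suc i)"
  shows "card (invs n (q \<circ> adj_transp i)) = Suc (card (invs n q))"
proof -
  have "(q \<circ> adj_transp i) (Suc i) < (q \<circ> adj_transp i) i" using lt by (simp add: adj_apply)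
  hence a: "{i, Suc i} \<in> invs n (q \<circ> adj_transp i)" using T_in_invs[OF i] by blast
  have b: "{i, Suc i} \<notin> invs n q" using T_in_invs[OF i] lt by simp
  have c1: "card (invs n (q \<circ> adj_transp i)) = card (invs n (q \<circ> adj_transp i) - {{i, Suc i}}) + 1"
    using card_split[OF finite_invs, of n "q \<circ> adj_transp i" "{i, Suc i}"] a by (simp only: if_True)
  have c2: "card (invs n q) = card (invs n q - {{i, Suc i}})"
    using card_split[OF finite_invs, of n q "{i, Suc i}"] b by (simp only: if_False)
  show ?thesis using c1 c2 card_invs_diff[OF i, of q] by linarith
qed

lemma invs_down:
  assumes i: "1 \<le> i" "i < n" and lt: "q (Suc i) < q i"
  shows "Suc (card (invs n (q \<circ> adj_transp i))) = card (invs n q)"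
proof -
  have "\<not> (q \<circ> adj_transp i) (Suc i) < (q \<circ> adj_transp i) i" using lt by (simp add: adj_apply)
  hence a: "{i, Suc i} \<notin> invs n (q \<circ> adj_transp i)" using T_in_invs[OF i] by blast
  have b: "{i, Suc i} \<in> invs n q" using T_in_invs[OF i] lt by simp
  have c1: "card (invs n (q \<circ> adj_transp i)) = card (invs n (q \<circ> adj_transp i) - {{i, Suc i}})"
    using card_split[OF finite_invs, of n "q \<circ> adj_transp i" "{i, Suc i}"] a by (simp only: if_False)
  have c2: "card (invs n q) = card (invs n q - {{i, Suc i}}) + 1"
    using card_split[OF finite_invs, of n q "{i, Suc i}"] b by (simp only: if_True)
  show ?thesis using c1 c2 card_invs_diff[OF i, of q] by linarith
qed

lemma inv_word_perm: "inv (word_perm ws) = word_perm (rev ws)"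
proof (induction ws)
  case Nil thus ?case by simp
next
  case (Cons i ws)
  have h: "inv (adj_transp i \<circ> word_perm ws) = inv (word_perm ws) \<circ> inv (adj_transp i)"
    by (rule o_inv_distrib) simp_all
  have e: "word_perm (rev (i # ws)) = word_perm (rev ws) \<circ> adj_transp i"
    by (simp only: rev.simps word_perm_append word_perm_Cons word_perm_Nil comp_id)
  have s: "inv (adj_transp i) = adj_transp i" unfolding adj_transp_def by (rule inv_transpose_eq)
  show ?case unfolding e word_perm_Cons by (simp only: h Cons.IH s)
qed

lemma invs_word_le:
  assumes "set ws \<subseteq> {1..<n}"
  shows "card (invs n (word_perm (rev ws))) \<le> length ws"
  using assms
proof (induction ws)
  case Nil
  show ?case by simp
next
  case (Cons i ws)
  have i: "1 \<le> i" "i < n" using Cons.prems by auto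
  have IH: "card (invs n (word_perm (rev ws))) \<le> length ws" using Cons by simp
  define q where "q = word_perm (rev ws)"
  have "inj q" unfolding q_def using bij_word_perm bij_is_inj by blast
  hence "q i \<noteq> q (Suc i)" by (metis inj_eq n_not_Suc_n)
  hence c: "card (invs n (q \<circ> adj_transp i)) \<le> Suc (card (invs n q))"
    using invs_up[OF i, of q] invs_down[OF i, of q] by (cases "q i < q (Suc i)") auto
  have e: "word_perm (rev (i # ws)) = q \<circ> adj_transp i" unfolding q_def
    by (simp only: rev.simps word_perm_append word_perm_Cons word_perm_Nil comp_id)
  have "length (i # ws) = Suc (length ws)" by simp
  thus ?case unfolding e using c IH unfolding q_def by linarith
qed

lemma permutes_adj: "1 \<le> i \<Longrightarrow> i < n \<Longrightarrow> adj_transp i permutes {1..n}"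
  unfolding adj_transp_def by (rule permutes_swap_id) auto

lemma permutes_adj_comp: "w permutes {1..n} \<Longrightarrow> 1 \<le> i \<Longrightarrow> i < n \<Longrightarrow> (adj_transp i \<circ> w) permutes {1..n}"
  using permutes_compose permutes_adj by blast

lemma inv_adj_comp: "w permutes S \<Longrightarrow> inv (adj_transp i \<circ> w) = inv w \<circ> adj_transp i"
proof -
  assume "w permutes S"
  hence "bij w" by (rule permutes_bij)
  hence h: "inv (adj_transp i \<circ> w) = inv w \<circ> inv (adj_transp i)" by (intro o_inv_distrib) simp_all
  have s: "inv (adj_transp i) = adj_transp i" unfolding adj_transp_def by (rule inv_transpose_eq)
  show ?thesis by (simp only: h s)
qed

lemma mono_perm_id:
  assumes p: "q permutes {1..n}" and m: "\<forall>i. 1 \<le> i \<longrightarrow> i < n \<longrightarrow> q i < q (Suc i)"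
  shows "q = id"
proof -
  have rng: "k \<in> {1..n} \<Longrightarrow> q k \<in> {1..n}" for k using permutes_in_image[OF p] by blast
  have up: "1 \<le> k \<Longrightarrow> k \<le> n \<Longrightarrow> k \<le> q k" for k
  proof (induction k)
    case 0 thus ?case by simp
  next
    case (Suc k)
    show ?case
    proof (cases "k = 0")
      case True thus ?thesis using rng[of 1] Suc.prems by auto
    next
      case False
      have "k \<le> q k" using Suc.IH False Suc.prems by simp
      moreover have "q k < q (Suc k)" using m False Suc.prems by simp
      ultimately show ?thesis by simp
    qed
  qed
  have down: "1 \<le> n - m \<Longrightarrow> q (n - m) \<le> n - m" for m
  proof (induction m)
    case 0 thus ?case using rng[of n] by auto
  next
    case (Suc m)
    have h: "1 \<le> n - Suc m" by fact
    hence e: "n - m = Suc (n - Suc m)" by simp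
    have "q (n - Suc m) < q (Suc (n - Suc m))" using m h by auto
    thus "q (n - Suc m) \<le> n - Suc m" using Suc.IH h e by simp
  qed
  have "q k = k" for k
  proof (cases "k \<in> {1..n}")
    case True
    have "q (n - (n - k)) \<le> n - (n - k)" using down[of "n - k"] True by auto
    thus ?thesis using up[of k] True by auto
  next
    case False thus ?thesis using p by (simp add: permutes_not_in)
  qed
  thus ?thesis by auto
qed

lemma word_exists:
  assumes "w permutes {1..n}"
  shows "\<exists>ws. is_word_for n w ws \<and> length ws = ninv n w"
  using assms
proof (induction "ninv n w" arbitrary: w rule: less_induct)
  case less
  define q where "q = inv w"
  have qp: "q permutes {1..n}" unfolding q_def using less.prems by (rule permutes_inv)
  show ?case
  proof (cases "\<forall>i. 1 \<le> i \<longrightarrow> i < n \<longrightarrow> q i < q (Suc i)")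
    case True
    hence "q = id" using mono_perm_id qp by blast
    hence w: "w = id" using less.prems unfolding q_def
      by (metis inv_id inv_inv_eq permutes_bij)
    have "inv w = id" using \<open>q = id\<close> q_def by simp
    hence "ninv n w = 0" unfolding ninv_def by simp
    thus ?thesis using w by (intro exI[of _ "[]"]) (simp add: is_word_for_def)
  next
    case False
    then obtain i where i: "1 \<le> i" "i < n" and d0: "\<not> q i < q (Suc i)" by blast
    have "q i \<noteq> q (Suc i)" using qp permutes_inj by (metis inj_eq n_not_Suc_n)
    hence d: "q (Suc i) < q i" using d0 by simp
    define w' where "w' = adj_transp i \<circ> w"
    have wp: "w' permutes {1..n}" unfolding w'_def using permutes_adj_comp less.prems i by blast
    have iw: "inv w' = q \<circ> adj_transp i" unfolding w'_def q_def using inv_adj_comp less.prems by blast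
    have lt: "Suc (ninv n w') = ninv n w" unfolding ninv_def iw using invs_down[OF i d] q_def by simp
    obtain ws where ws: "is_word_for n w' ws" "length ws = ninv n w'"
      using less.hyps[of w'] lt wp by auto
    have "is_word_for n w (i # ws)" using ws(1) i unfolding is_word_for_def w'_def
      by (auto simp: comp_assoc[symmetric])
    thus ?thesis using ws(2) lt by (intro exI[of _ "i # ws"]) simp
  qed
qed

lemma word_ninv_le:
  assumes "is_word_for n w ws" shows "ninv n w \<le> length ws"
proof -
  have "inv w = word_perm (rev ws)" using assms inv_word_perm unfolding is_word_for_def by blast
  thus ?thesis using invs_word_le assms unfolding ninv_def is_word_for_def by simp
qed

lemma coxeter_length_eq:
  assumes "w permutes {1..n}" shows "coxeter_length n w = ninv n w"
  unfolding coxeter_length_def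
proof (rule Least_equality)
  show "\<exists>ws. is_word_for n w ws \<and> length ws = ninv n w" using word_exists[OF assms] .
next
  fix k assume "\<exists>ws. is_word_for n w ws \<and> length ws = k"
  thus "ninv n w \<le> k" using word_ninv_le by blast
qed

lemma reduced_words_iff:
  assumes "w permutes {1..n}"
  shows "ws \<in> reduced_words n w \<longleftrightarrow> is_word_for n w ws \<and> length ws = ninv n w"
  unfolding reduced_words_def using coxeter_length_eq[OF assms] by simp

lemma reduced_words_ne:
  assumes "w permutes {1..n}" shows "reduced_words n w \<noteq> {}"
  using word_exists[OF assms] reduced_words_iff[OF assms] by blast

lemma finite_reduced_words: "finite (reduced_words n w)"
proof -
  have "reduced_words n w \<subseteq> {xs. set xs \<subseteq> {1..<n} \<and> length xs = coxeter_length n w}"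
    unfolding reduced_words_def is_word_for_def by auto
  thus ?thesis using finite_lists_length_eq[of "{1..<n}"] finite_subset by blast
qed

lemma red_cons_D:
  assumes wp: "w permutes {1..n}" and r: "i # ws \<in> reduced_words n w"
  shows "1 \<le> i \<and> i < n \<and> inv w (Suc i) < inv w i \<and> ws \<in> reduced_words n (adj_transp i \<circ> w)"
proof -
  have r': "is_word_for n w (i # ws)" "Suc (length ws) = ninv n w" using r reduced_words_iff[OF wp] by auto
  have i: "1 \<le> i" "i < n" using r'(1) unfolding is_word_for_def by auto
  define q where "q = inv w"
  have wp': "(adj_transp i \<circ> w) permutes {1..n}" using permutes_adj_comp wp i by blast
  have ws: "is_word_for n (adj_transp i \<circ> w) ws" using r'(1) unfolding is_word_for_def
    by (auto simp: comp_assoc[symmetric])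
  have le: "ninv n (adj_transp i \<circ> w) \<le> length ws" using word_ninv_le[OF ws] .
  have iw: "inv (adj_transp i \<circ> w) = q \<circ> adj_transp i" unfolding q_def using inv_adj_comp wp by blast
  have qp: "q permutes {1..n}" unfolding q_def using wp by (rule permutes_inv)
  have "q i \<noteq> q (Suc i)" using qp permutes_inj by (metis inj_eq n_not_Suc_n)
  moreover have "\<not> q i < q (Suc i)"
  proof
    assume "q i < q (Suc i)"
    hence "ninv n (adj_transp i \<circ> w) = Suc (ninv n w)" unfolding ninv_def iw q_def
      using invs_up[OF i] q_def by simp
    thus False using le r'(2) by simp
  qed
  ultimately have d: "q (Suc i) < q i" by simp
  have "Suc (ninv n (adj_transp i \<circ> w)) = ninv n w" unfolding ninv_def iw using invs_down[OF i d] q_def by simp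
  hence "ws \<in> reduced_words n (adj_transp i \<circ> w)" using ws r'(2) reduced_words_iff[OF wp'] by simp
  thus ?thesis using i d q_def by simp
qed

lemma red_cons_I:
  assumes wp: "w permutes {1..n}" and i: "1 \<le> i" "i < n" and d: "inv w (Suc i) < inv w i"
    and r: "ws \<in> reduced_words n (adj_transp i \<circ> w)"
  shows "i # ws \<in> reduced_words n w"
proof -
  have wp': "(adj_transp i \<circ> w) permutes {1..n}" using permutes_adj_comp wp i by blast
  have r': "is_word_for n (adj_transp i \<circ> w) ws" "length ws = ninv n (adj_transp i \<circ> w)"
    using r reduced_words_iff[OF wp'] by auto
  have iw: "inv (adj_transp i \<circ> w) = inv w \<circ> adj_transp i" using inv_adj_comp wp by blast
  have "Suc (ninv n (adj_transp i \<circ> w)) = ninv n w" unfolding ninv_def iw using invs_down[OF i d] by simp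
  moreover have "is_word_for n w (i # ws)" using r'(1) i unfolding is_word_for_def
    by (auto simp: comp_assoc[symmetric])
  ultimately show ?thesis using r'(2) reduced_words_iff[OF wp] by simp
qed




definition Mv :: "nat \<Rightarrow> (nat \<Rightarrow> nat) \<Rightarrow> nat list \<Rightarrow> nat list \<Rightarrow> bool" where
  "Mv n w = (\<lambda>a b. a \<in> reduced_words n w \<and> b \<in> reduced_words n w \<and> (braid_move a b \<or> comm_move a b))"

lemma braid_move_sym: "braid_move a b \<Longrightarrow> braid_move b a"
  unfolding braid_move_def by blast

lemma comm_move_sym: "comm_move a b \<Longrightarrow> comm_move b a"
  unfolding comm_move_def by blast

lemma Mv_sym: "\<forall>a b. Mv n w a b \<longrightarrow> Mv n w b a"
  unfolding Mv_def using braid_move_sym comm_move_sym by blast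

lemma braid_move_cons: "braid_move a b \<Longrightarrow> braid_move (i # a) (i # b)"
  unfolding braid_move_def by (metis append_Cons)

lemma comm_move_cons: "comm_move a b \<Longrightarrow> comm_move (i # a) (i # b)"
  unfolding comm_move_def by (metis append_Cons)

lemma Mv_lift:
  assumes wp: "w permutes {1..n}" and i: "1 \<le> i" "i < n" and d: "inv w (Suc i) < inv w i"
    and m: "(Mv n (adj_transp i \<circ> w))\<^sup>*\<^sup>* u v"
  shows "(Mv n w)\<^sup>*\<^sup>* (i # u) (i # v)"
  using m
proof (induction rule: rtranclp_induct)
  case base thus ?case by simp
next
  case (step y z)
  have "Mv n w (i # y) (i # z)"
    using step.hyps(2) red_cons_I[OF wp i d] braid_move_cons comm_move_cons unfolding Mv_def by blast
  thus ?case using step.IH by (meson rtranclp.rtrancl_into_rtrancl)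
qed

lemma red_length:
  assumes "w permutes {1..n}" "u \<in> reduced_words n w" shows "length u = ninv n w"
  using assms reduced_words_iff by blast

lemma key_case:
  assumes IH: "\<And>w u v. w permutes {1..n} \<Longrightarrow> u \<in> reduced_words n w \<Longrightarrow> v \<in> reduced_words n w \<Longrightarrow>
                  length u < k \<Longrightarrow> (Mv n w)\<^sup>*\<^sup>* u v"
    and wp: "w permutes {1..n}" and ij: "i < j"
    and ru: "i # u' \<in> reduced_words n w" and rv: "j # v' \<in> reduced_words n w"
    and k: "length (i # u') = k"
  shows "(Mv n w)\<^sup>*\<^sup>* (i # u') (j # v')"
proof -
  define q where "q = inv w"
  have Du: "1 \<le> i \<and> i < n \<and> q (Suc i) < q i \<and> u' \<in> reduced_words n (adj_transp i \<circ> w)"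
    using red_cons_D[OF wp ru] q_def by simp
  have Dv: "1 \<le> j \<and> j < n \<and> q (Suc j) < q j \<and> v' \<in> reduced_words n (adj_transp j \<circ> w)"
    using red_cons_D[OF wp rv] q_def by simp
  have i: "1 \<le> i" "i < n" and j: "1 \<le> j" "j < n" using Du Dv by auto
  have wi: "(adj_transp i \<circ> w) permutes {1..n}" using permutes_adj_comp wp i by blast
  have wj: "(adj_transp j \<circ> w) permutes {1..n}" using permutes_adj_comp wp j by blast
  have qi: "inv (adj_transp i \<circ> w) = q \<circ> adj_transp i" using inv_adj_comp wp q_def by blast
  have qj: "inv (adj_transp j \<circ> w) = q \<circ> adj_transp j" using inv_adj_comp wp q_def by blast
  have lu: "length u' = ninv n (adj_transp i \<circ> w)" using red_length wi Du by blast
  have lu2: "length u' < k" using k by simp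
  have lv: "length v' = ninv n (adj_transp j \<circ> w)" using red_length wj Dv by blast
  have lv2: "ninv n (adj_transp j \<circ> w) < k"
    using red_length[OF wp rv] red_length[OF wp ru] k lv by simp
  show ?thesis
  proof (cases "Suc i < j")
    case True
    have sij: "adj_transp i \<circ> adj_transp j = adj_transp j \<circ> adj_transp i" using adj_transp_comm True by blast
    define w2 where "w2 = adj_transp j \<circ> (adj_transp i \<circ> w)"
    have w2': "w2 = adj_transp i \<circ> (adj_transp j \<circ> w)" unfolding w2_def by (simp only: comp_assoc[symmetric] sij)
    have w2p: "w2 permutes {1..n}" unfolding w2_def using permutes_adj_comp wi j by blast
    obtain z where z: "z \<in> reduced_words n w2" using reduced_words_ne[OF w2p] by blast
    have d1: "inv (adj_transp i \<circ> w) (Suc j) < inv (adj_transp i \<circ> w) j"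
      unfolding qi using Dv True by (simp add: adj_apply)
    have jz: "j # z \<in> reduced_words n (adj_transp i \<circ> w)"
      using red_cons_I[OF wi j d1] z unfolding w2_def by blast
    have ijz: "i # j # z \<in> reduced_words n w" using red_cons_I[OF wp i _ jz] Du q_def by blast
    have d2: "inv (adj_transp j \<circ> w) (Suc i) < inv (adj_transp j \<circ> w) i"
      unfolding qj using Du True by (simp add: adj_apply)
    have iz: "i # z \<in> reduced_words n (adj_transp j \<circ> w)"
      using red_cons_I[OF wj i d2] z unfolding w2' by blast
    have jiz: "j # i # z \<in> reduced_words n w" using red_cons_I[OF wp j _ iz] Dv q_def by blast
    have s1: "(Mv n (adj_transp i \<circ> w))\<^sup>*\<^sup>* u' (j # z)" using IH[OF wi _ jz lu2] Du by blast
    have s1': "(Mv n w)\<^sup>*\<^sup>* (i # u') (i # j # z)" using Mv_lift[OF wp i _ s1] Du q_def by blast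
    have cm: "comm_move (i # j # z) (j # i # z)"
      unfolding comm_move_def using True by (intro exI[of _ "[]"] exI[of _ z] exI[of _ i] exI[of _ j]) simp
    have s2: "Mv n w (i # j # z) (j # i # z)" unfolding Mv_def using cm ijz jiz by blast
    have liz: "length (i # z) < k" using red_length[OF wj iz] lv2 by simp
    have s3: "(Mv n (adj_transp j \<circ> w))\<^sup>*\<^sup>* (i # z) v'" using IH[OF wj iz _ liz] Dv by blast
    have s3': "(Mv n w)\<^sup>*\<^sup>* (j # i # z) (j # v')" using Mv_lift[OF wp j _ s3] Dv q_def by blast
    show ?thesis using s1' s2 s3' by (meson rtranclp.rtrancl_into_rtrancl rtranclp_trans)
  next
    case False
    hence jS: "j = Suc i" using ij by simp
    have i1: "1 \<le> Suc i" "Suc i < n" using j jS by auto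
    have dq: "q (Suc i) < q i" "q (Suc (Suc i)) < q (Suc i)" using Du Dv jS by auto
    define w3 where "w3 = adj_transp i \<circ> (adj_transp (Suc i) \<circ> (adj_transp i \<circ> w))"
    have br: "adj_transp i \<circ> (adj_transp (Suc i) \<circ> adj_transp i) = adj_transp (Suc i) \<circ> (adj_transp i \<circ> adj_transp (Suc i))"
      using adj_transp_braid[of i] by (simp add: comp_assoc)
    have w3': "w3 = adj_transp (Suc i) \<circ> (adj_transp i \<circ> (adj_transp (Suc i) \<circ> w))"
    proof -
      have "w3 = (adj_transp i \<circ> (adj_transp (Suc i) \<circ> adj_transp i)) \<circ> w" unfolding w3_def by (simp add: comp_assoc)
      also have "\<dots> = (adj_transp (Suc i) \<circ> (adj_transp i \<circ> adj_transp (Suc i))) \<circ> w" using br by simp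
      finally show ?thesis by (simp add: comp_assoc)
    qed
    define wa where "wa = adj_transp (Suc i) \<circ> (adj_transp i \<circ> w)"
    define wb where "wb = adj_transp i \<circ> (adj_transp (Suc i) \<circ> w)"
    define wj' where "wj' = adj_transp (Suc i) \<circ> w"
    have wjp: "wj' permutes {1..n}" unfolding wj'_def using wj jS by simp
    have wap: "wa permutes {1..n}" unfolding wa_def using permutes_adj_comp wi i1 by blast
    have wbp: "wb permutes {1..n}" unfolding wb_def using permutes_adj_comp wjp i unfolding wj'_def by blast
    have w3p: "w3 permutes {1..n}" unfolding w3_def using permutes_adj_comp wap i unfolding wa_def by blast
    obtain z where z: "z \<in> reduced_words n w3" using reduced_words_ne[OF w3p] by blast
    have qa: "inv wa = q \<circ> adj_transp i \<circ> adj_transp (Suc i)"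
      unfolding wa_def using inv_adj_comp[OF wi] qi by simp
    have qb: "inv wb = q \<circ> adj_transp (Suc i) \<circ> adj_transp i"
      unfolding wb_def using inv_adj_comp[OF wjp[unfolded wj'_def]] qj jS by simp
    have qj': "inv wj' = q \<circ> adj_transp (Suc i)" unfolding wj'_def using qj jS by simp
    have da: "inv wa (Suc i) < inv wa i" unfolding qa using dq by (simp add: adj_apply)
    have a1: "i # z \<in> reduced_words n wa" using red_cons_I[OF wap i da] z unfolding w3_def wa_def by simp
    have da2: "inv (adj_transp i \<circ> w) (Suc (Suc i)) < inv (adj_transp i \<circ> w) (Suc i)"
      unfolding qi using dq by (simp add: adj_apply)
    have a2: "Suc i # i # z \<in> reduced_words n (adj_transp i \<circ> w)"
      using red_cons_I[OF wi i1 da2] a1 unfolding wa_def by simp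
    have a3: "i # Suc i # i # z \<in> reduced_words n w" using red_cons_I[OF wp i _ a2] Du q_def by blast
    have db: "inv wb (Suc (Suc i)) < inv wb (Suc i)" unfolding qb using dq by (simp add: adj_apply)
    have b1: "Suc i # z \<in> reduced_words n wb" using red_cons_I[OF wbp i1 db] z unfolding w3' wb_def by simp
    have db2: "inv wj' (Suc i) < inv wj' i" unfolding qj' using dq by (simp add: adj_apply)
    have b2: "i # Suc i # z \<in> reduced_words n wj'" using red_cons_I[OF wjp i db2] b1 unfolding wb_def wj'_def by simp
    have b3: "Suc i # i # Suc i # z \<in> reduced_words n w"
      using red_cons_I[OF wp i1 _ b2[unfolded wj'_def]] dq q_def by blast
    have s1: "(Mv n (adj_transp i \<circ> w))\<^sup>*\<^sup>* u' (Suc i # i # z)" using IH[OF wi _ a2 lu2] Du by blast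
    have s1': "(Mv n w)\<^sup>*\<^sup>* (i # u') (i # Suc i # i # z)" using Mv_lift[OF wp i _ s1] Du q_def by blast
    have bm: "braid_move (i # Suc i # i # z) (Suc i # i # Suc i # z)"
      unfolding braid_move_def by (intro exI[of _ "[]"] exI[of _ z] exI[of _ i]) simp
    have s2: "Mv n w (i # Suc i # i # z) (Suc i # i # Suc i # z)" unfolding Mv_def using bm a3 b3 by blast
    have lb2: "length (i # Suc i # z) < k"
      using red_length[OF wjp b2] lv2 jS unfolding wj'_def by simp
    have s3: "(Mv n wj')\<^sup>*\<^sup>* (i # Suc i # z) v'" using IH[OF wjp b2 _ lb2] Dv jS unfolding wj'_def by blast
    have s3': "(Mv n w)\<^sup>*\<^sup>* (Suc i # i # Suc i # z) (Suc i # v')"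
      using Mv_lift[OF wp i1 _ s3[unfolded wj'_def]] dq q_def by blast
    show ?thesis using s1' s2 s3' jS by (meson rtranclp.rtrancl_into_rtrancl rtranclp_trans)
  qed
qed

lemma matsumoto:
  "w permutes {1..n} \<Longrightarrow> u \<in> reduced_words n w \<Longrightarrow> v \<in> reduced_words n w \<Longrightarrow> (Mv n w)\<^sup>*\<^sup>* u v"
proof (induction "length u" arbitrary: w u v rule: less_induct)
  case less
  note wp = less.prems(1)
  show ?case
  proof (cases u)
    case Nil
    have "length v = 0" using red_length[OF wp less.prems(3)] red_length[OF wp less.prems(2)] Nil by simp
    thus ?thesis using Nil by simp
  next
    case (Cons i u')
    have "length v = length u" using red_length[OF wp less.prems(3)] red_length[OF wp less.prems(2)] by simp
    then obtain j v' where v: "v = j # v'" using Cons by (cases v) auto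
    have IH: "\<And>w a b. w permutes {1..n} \<Longrightarrow> a \<in> reduced_words n w \<Longrightarrow> b \<in> reduced_words n w \<Longrightarrow>
                  length a < length u \<Longrightarrow> (Mv n w)\<^sup>*\<^sup>* a b" using less.hyps by blast
    show ?thesis
    proof (cases "i = j")
      case True
      have Du: "1 \<le> i \<and> i < n \<and> inv w (Suc i) < inv w i \<and> u' \<in> reduced_words n (adj_transp i \<circ> w)"
        using red_cons_D[OF wp] less.prems(2) Cons by simp
      have Dv: "v' \<in> reduced_words n (adj_transp i \<circ> w)"
        using red_cons_D[OF wp] less.prems(3) v True by simp
      have wi: "(adj_transp i \<circ> w) permutes {1..n}" using permutes_adj_comp wp Du by blast
      have mm: "(Mv n (adj_transp i \<circ> w))\<^sup>*\<^sup>* u' v'" using IH[OF wi _ Dv] Du Cons by simp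
      show ?thesis using Mv_lift[OF wp _ _ _ mm] Du Cons v True by simp
    next
      case False
      show ?thesis
      proof (cases "i < j")
        case True
        show ?thesis using key_case[OF IH wp True] less.prems Cons v by simp
      next
        case False
        hence "j < i" using \<open>i \<noteq> j\<close> by simp
        have "length (j # v') = length u" using \<open>length v = length u\<close> v by simp
        hence "(Mv n w)\<^sup>*\<^sup>* (j # v') (i # u')"
          using key_case[OF IH wp \<open>j < i\<close>] less.prems Cons v by simp
        thus ?thesis using rtranclp_sym[OF Mv_sym] Cons v by blast
      qed
    qed
  qed
qed




lemma rtranclp_braid_cls:
  fixes S :: "nat list set"
  defines "rel \<equiv> (\<lambda>a b. a \<in> S \<and> b \<in> S \<and> braid_move a b)"
  assumes "rel\<^sup>*\<^sup>* u v"
  shows "\<forall>A B. (A = B \<or> A \<inter> B = {}) \<longrightarrow> filt (rseq u) A B = filt (rseq v) A B"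
  using assms(2)
proof (induction rule: rtranclp_induct)
  case base thus ?case by simp
next
  case (step y z)
  have "braid_move y z" using step.hyps(2) unfolding rel_def by simp
  thus ?case using step.IH braid_move_rseq by metis
qed

lemma rtranclp_comm_cls:
  fixes S :: "nat list set"
  defines "rel \<equiv> (\<lambda>a b. a \<in> S \<and> b \<in> S \<and> comm_move a b)"
  assumes "rel\<^sup>*\<^sup>* u v"
  shows "\<forall>A B. (A = B \<or> A \<inter> B \<noteq> {}) \<longrightarrow> filt (rseq u) A B = filt (rseq v) A B"
  using assms(2)
proof (induction rule: rtranclp_induct)
  case base thus ?case by simp
next
  case (step y z)
  have "comm_move y z" using step.hyps(2) unfolding rel_def by simp
  thus ?case using step.IH comm_move_rseq by metis
qed

definition cls :: "('a \<Rightarrow> 'a \<Rightarrow> bool) \<Rightarrow> 'a set \<Rightarrow> 'a \<Rightarrow> 'a set" where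
  "cls mv S u = {v \<in> S. (\<lambda>a b. a \<in> S \<and> b \<in> S \<and> mv a b)\<^sup>*\<^sup>* u v}"

lemma move_classes_cls: "move_classes mv S = cls mv S ` S"
  unfolding move_classes_def cls_def by simp

lemma cls_self: "u \<in> S \<Longrightarrow> u \<in> cls mv S u"
  unfolding cls_def by simp

lemma cls_eq:
  assumes sym: "\<forall>a b. mv a b \<longrightarrow> mv b a" and u: "u \<in> cls mv S u0"
  shows "cls mv S u = cls mv S u0"
proof -
  let ?r = "(\<lambda>a b. a \<in> S \<and> b \<in> S \<and> mv a b)"
  have symr: "\<forall>a b. ?r a b \<longrightarrow> ?r b a" using sym by blast
  have h: "?r\<^sup>*\<^sup>* u0 u" using u unfolding cls_def by simp
  have h': "?r\<^sup>*\<^sup>* u u0" using rtranclp_sym[OF symr h] .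
  show ?thesis unfolding cls_def using h h' by (meson rtranclp_trans)
qed

lemma cls_step:
  assumes sym: "\<forall>a b. mv a b \<longrightarrow> mv b a" and "a \<in> S" "b \<in> S" "mv a b"
  shows "cls mv S a = cls mv S b"
proof -
  have "(\<lambda>x y. x \<in> S \<and> y \<in> S \<and> mv x y)\<^sup>*\<^sup>* a b"
    by (rule r_into_rtranclp) (use assms(2-4) in blast)
  hence "b \<in> cls mv S a" unfolding cls_def using assms(3) by blast
  from cls_eq[OF sym this] show ?thesis by (rule HOL.sym)
qed

theorem main_result:
  fixes n :: nat and w :: "nat \<Rightarrow> nat"
  assumes wp: "w permutes {1..n}"
  shows "circuit_free n w \<longleftrightarrow>
    int (card (reduced_words n w)) =
      int (card (braid_classes n w)) + int (card (comm_classes n w)) - 1"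
proof -
  define R where "R = reduced_words n w"
  define cB where "cB = cls braid_move R"
  define cC where "cC = cls comm_move R"
  have BC: "braid_classes n w = cB ` R" unfolding braid_classes_def cB_def R_def by (rule move_classes_cls)
  have CC: "comm_classes n w = cC ` R" unfolding comm_classes_def cC_def R_def by (rule move_classes_cls)
  have finR: "finite R" unfolding R_def by (rule finite_reduced_words)
  have neR: "R \<noteq> {}" unfolding R_def by (rule reduced_words_ne[OF wp])
  define V where "V = gamma_vertices n w"
  have V: "V = Inl ` (cB ` R) \<union> Inr ` (cC ` R)" unfolding V_def gamma_vertices_def BC CC ..
  have finV: "finite V" using V finR by simp
  have cardV: "card V = card (braid_classes n w) + card (comm_classes n w)"
  proof -
    have d: "(Inl ` (cB ` R) :: (nat list set + nat list set) set) \<inter> Inr ` (cC ` R) = {}" by auto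
    have "card V = card (Inl ` (cB ` R) :: (nat list set + nat list set) set) + card (Inr ` (cC ` R) :: (nat list set + nat list set) set)"
      unfolding V using card_Un_disjoint[OF _ _ d] finR by simp
    also have "\<dots> = card (cB ` R) + card (cC ` R)"
      by (simp add: card_image)
    finally show ?thesis unfolding BC CC .
  qed
  have symE: "\<forall>a b. gamma_adj a b \<longrightarrow> gamma_adj b a" unfolding gamma_adj_def by blast
  have irrE: "\<forall>a. \<not> gamma_adj a a" unfolding gamma_adj_def by blast
  have bsym: "\<forall>a b. braid_move a b \<longrightarrow> braid_move b a" using braid_move_sym by blast
  have csym: "\<forall>a b. comm_move a b \<longrightarrow> comm_move b a" using comm_move_sym by blast
  have cBe: "cB u = cB u0" if "u \<in> cB u0" for u u0
    using that unfolding cB_def by (rule cls_eq[OF bsym])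
  have cCe: "cC u = cC u0" if "u \<in> cC u0" for u u0
    using that unfolding cC_def by (rule cls_eq[OF csym])
  have selfB: "r \<in> cB r" if "r \<in> R" for r unfolding cB_def using cls_self that by metis
  have selfC: "r \<in> cC r" if "r \<in> R" for r unfolding cC_def using cls_self that by metis
  have subR: "cB r \<subseteq> R" "cC r \<subseteq> R" for r unfolding cB_def cC_def cls_def by auto
  have uniq: "u = v" if "u \<in> cB r \<inter> cC r'" "v \<in> cB r \<inter> cC r'" for u v r r'
  proof -
    let ?rb = "\<lambda>a b. a \<in> R \<and> b \<in> R \<and> braid_move a b"
    let ?rc = "\<lambda>a b. a \<in> R \<and> b \<in> R \<and> comm_move a b"
    have b1: "?rb\<^sup>*\<^sup>* r u" "?rb\<^sup>*\<^sup>* r v" using that unfolding cB_def cls_def by auto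
    have c1: "?rc\<^sup>*\<^sup>* r' u" "?rc\<^sup>*\<^sup>* r' v" using that unfolding cC_def cls_def by auto
    have fb: "\<forall>A B. (A = B \<or> A \<inter> B = {}) \<longrightarrow> filt (rseq r) A B = filt (rseq u) A B"
             "\<forall>A B. (A = B \<or> A \<inter> B = {}) \<longrightarrow> filt (rseq r) A B = filt (rseq v) A B"
      using rtranclp_braid_cls[OF b1(1)] rtranclp_braid_cls[OF b1(2)] by blast+
    have fc: "\<forall>A B. (A = B \<or> A \<inter> B \<noteq> {}) \<longrightarrow> filt (rseq r') A B = filt (rseq u) A B"
             "\<forall>A B. (A = B \<or> A \<inter> B \<noteq> {}) \<longrightarrow> filt (rseq r') A B = filt (rseq v) A B"
      using rtranclp_comm_cls[OF c1(1)] rtranclp_comm_cls[OF c1(2)] by blast+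
    have "\<forall>A B. filt (rseq u) A B = filt (rseq v) A B"
    proof (intro allI)
      fix A B
      show "filt (rseq u) A B = filt (rseq v) A B"
      proof (cases "A \<inter> B = {}")
        case True thus ?thesis using fb by metis
      next
        case False thus ?thesis using fc by metis
      qed
    qed
    hence "rseq u = rseq v" by (rule filt_all_eq)
    thus ?thesis by (rule rseq_inj)
  qed
  define f where "f r = {Inl (cB r), Inr (cC r)}" for r
  have edgesE: "edges V gamma_adj = f ` R"
  proof (intro equalityI subsetI)
    fix x assume "x \<in> edges V gamma_adj"
    then obtain a b where x: "x = {a, b}" "a \<in> V" "b \<in> V" "gamma_adj a b" unfolding edges_def by blast
    then obtain B C where bc: "(a = Inl B \<and> b = Inr C) \<or> (a = Inr C \<and> b = Inl B)" "B \<inter> C \<noteq> {}"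
      unfolding gamma_adj_def by blast
    have BV: "Inl B \<in> V" "Inr C \<in> V" using bc(1) x by auto
    obtain r0 where r0: "r0 \<in> R" "B = cB r0" using BV(1) V by auto
    obtain r1 where r1: "r1 \<in> R" "C = cC r1" using BV(2) V by auto
    obtain r where r: "r \<in> B" "r \<in> C" using bc(2) by blast
    have rR: "r \<in> R" using r r0 subR by blast
    have "B = cB r" using cBe r r0 by metis
    moreover have "C = cC r" using cCe r r1 by metis
    ultimately have "x = f r" using x bc(1) unfolding f_def by auto
    thus "x \<in> f ` R" using rR by blast
  next
    fix x assume "x \<in> f ` R"
    then obtain r where r: "r \<in> R" "x = f r" by blast
    have "gamma_adj (Inl (cB r)) (Inr (cC r))" unfolding gamma_adj_def using selfB[OF r(1)] selfC[OF r(1)] by blast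
    moreover have "Inl (cB r) \<in> V" "Inr (cC r) \<in> V" using V r(1) by auto
    ultimately show "x \<in> edges V gamma_adj" unfolding edges_def f_def r(2) by blast
  qed
  have injf: "inj_on f R"
  proof (rule inj_onI)
    fix r r' assume r: "r \<in> R" "r' \<in> R" "f r = f r'"
    have e: "cB r = cB r'" "cC r = cC r'" using r(3) unfolding f_def by (auto simp: doubleton_eq_iff)
    have "r \<in> cB r \<inter> cC r" "r' \<in> cB r \<inter> cC r" using selfB selfC r e by auto
    thus "r = r'" using uniq by blast
  qed
  have cardE: "card (edges V gamma_adj) = card R" unfolding edgesE using card_image[OF injf] .
  define Ev where "Ev = (\<lambda>a b. a \<in> V \<and> b \<in> V \<and> gamma_adj a b)"
  have edge_r: "Ev (Inl (cB r)) (Inr (cC r))" "Ev (Inr (cC r)) (Inl (cB r))" if "r \<in> R" for r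
  proof -
    have "gamma_adj (Inl (cB r)) (Inr (cC r))" unfolding gamma_adj_def using selfB[OF that] selfC[OF that] by blast
    moreover have "Inl (cB r) \<in> V" "Inr (cC r) \<in> V" using V that by auto
    ultimately show "Ev (Inl (cB r)) (Inr (cC r))" "Ev (Inr (cC r)) (Inl (cB r))" unfolding Ev_def using symE by blast+
  qed
  have mvstep: "Ev\<^sup>*\<^sup>* (Inl (cB a)) (Inl (cB b))" if "Mv n w a b" for a b
  proof -
    have ab: "a \<in> R" "b \<in> R" using that unfolding Mv_def R_def by auto
    have "braid_move a b \<or> comm_move a b" using that unfolding Mv_def by auto
    thus ?thesis
    proof
      assume "braid_move a b"
      hence "cB a = cB b" unfolding cB_def using cls_step[OF bsym] ab by metis
      thus ?thesis by simp
    next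
      assume "comm_move a b"
      hence e: "cC a = cC b" unfolding cC_def using cls_step[OF csym] ab by metis
      have "Ev (Inl (cB a)) (Inr (cC a))" using edge_r ab by blast
      moreover have "Ev (Inr (cC b)) (Inl (cB b))" using edge_r ab by blast
      ultimately show ?thesis using e by (metis rtranclp.rtrancl_into_rtrancl r_into_rtranclp)
    qed
  qed
  have mvpath: "Ev\<^sup>*\<^sup>* (Inl (cB a)) (Inl (cB b))" if "(Mv n w)\<^sup>*\<^sup>* a b" for a b
    using that
  proof (induction rule: rtranclp_induct)
    case base thus ?case by simp
  next
    case (step y z) thus ?case using mvstep by (meson rtranclp_trans)
  qed
  obtain r0 where r0: "r0 \<in> R" using neR by blast
  have conn: "\<forall>x\<in>V. Ev\<^sup>*\<^sup>* (Inl (cB r0)) x"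
  proof
    fix x assume "x \<in> V"
    then obtain r where r: "r \<in> R" "x = Inl (cB r) \<or> x = Inr (cC r)" using V by auto
    have p: "Ev\<^sup>*\<^sup>* (Inl (cB r0)) (Inl (cB r))"
      using mvpath matsumoto[OF wp] r0 r(1) unfolding R_def by blast
    show "Ev\<^sup>*\<^sup>* (Inl (cB r0)) x" using r(2)
    proof
      assume "x = Inl (cB r)" thus ?thesis using p by simp
    next
      assume "x = Inr (cC r)" thus ?thesis using p edge_r[OF r(1)] by (meson rtranclp.rtrancl_into_rtrancl)
    qed
  qed
  have r0V: "Inl (cB r0) \<in> V" using V r0 by auto
  have L1: "card V \<le> card R + 1"
    using conn_edges_lower[OF finV r0V conn[unfolded Ev_def]] cardE by simp
  have cf: "circuit_free n w \<longleftrightarrow> \<not> has_cycle V gamma_adj" unfolding circuit_free_def V_def ..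
  have "circuit_free n w \<longleftrightarrow> card R + 1 = card V"
  proof
    assume "circuit_free n w"
    hence "card (edges V gamma_adj) < card V"
      using acyclic_edges_upper[OF finV _ symE irrE] r0V cf by blast
    thus "card R + 1 = card V" using L1 cardE by simp
  next
    assume eq: "card R + 1 = card V"
    show "circuit_free n w" unfolding cf
    proof
      assume cyc: "has_cycle V gamma_adj"
      obtain e where e: "e \<in> edges V gamma_adj"
        and c': "\<forall>x y. Ev\<^sup>*\<^sup>* x y \<longrightarrow>
             (\<lambda>a b. a \<in> V \<and> b \<in> V \<and> gamma_adj a b \<and> {a,b} \<noteq> e)\<^sup>*\<^sup>* x y"
        using cycle_edge_removal[OF symE cyc] unfolding Ev_def by blast
      define E' where "E' = (\<lambda>a b. gamma_adj a b \<and> {a,b} \<noteq> e)"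
      have conn': "\<forall>x\<in>V. (\<lambda>a b. a \<in> V \<and> b \<in> V \<and> E' a b)\<^sup>*\<^sup>* (Inl (cB r0)) x"
        using conn c' unfolding E'_def by blast
      have "card V \<le> card (edges V E') + 1" using conn_edges_lower[OF finV r0V conn'] .
      moreover have "edges V E' = edges V gamma_adj - {e}" unfolding edges_def E'_def by blast
      moreover have "card (edges V gamma_adj - {e}) + 1 = card (edges V gamma_adj)"
        using card_Suc_Diff1[OF finite_edges[OF finV] e] by simp
      ultimately have "card V \<le> card R" using cardE by simp
      thus False using eq by simp
    qed
  qed
  thus ?thesis unfolding R_def using cardV by linarith
qed


theorem proposition4p14:
  fixes n :: nat and w :: "nat \<Rightarrow> nat"
  assumes "w permutes {1..n}"
  shows "circuit_free n w \<longleftrightarrow>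
    int (card (reduced_words n w)) =
      int (card (braid_classes n w)) + int (card (comm_classes n w)) - 1"
  using main_result[OF assms] .

end
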